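(* Let $[r:s]\in\mathbb{P}^1$, $X=\{u_1x=v_1y,\ u_2z=v_2t,\ w^2+r(x+y)^2+r(z+t)^2=(2s+2)(xt+yz)+(2s-2)(xz+yt)\}\subset\mathbb{P}^1\times\mathbb{P}^1\times\mathbb{P}^4$, and let $\mathbf{G}\subset\mathrm{Aut}(X)$ be generated by $\Gamma$ and $\tau_1,\tau_2,\tau_3$. If $[r:s]\neq[\pm1:1]$, then $X$ has no $\mathbf{G}$-fixed points. If $[r:s]=[\pm1:1]$, then the only $\mathbf{G}$-fixed point of $X$ is the singular point $([1:1],[1:1],[1:1:\pm1:\pm1:0])$ (with the same sign as in $[r:s]$).
   Context: Coordinates are $([u_1:v_1],[u_2:v_2],[x:y:z:t:w])$. $\tau_1\colon([u_1:v_1],[u_2:v_2],[x:y:z:t:w])\mapsto([v_1:u_1],[v_2:u_2],[y:x:t:z:w])$, $\tau_2\colon\mapsto([u_2:v_2],[u_1:v_1],[z:t:x:y:w])$, $\tau_3\colon\mapsto([u_1:v_1],[u_2:v_2],[x:y:z:t:-w])$. $\Gamma\cong\mathbb{C}^\ast$ is the subgroup of $\mathrm{Aut}(X)$ obtained by lifting to $X$ (via the blow up $X\to Q$ of the quadric $Q\subset\mathbb{P}^4$ with the same equation along $Q\cap\{x=y=0\}$ and $Q\cap\{z=t=0\}$) the action on $\mathbb{P}^4$ by the matrices $$\begin{pmatrix}\frac{1+\lambda}{2}&\frac{1-\lambda}{2}&0&0&0\\ \frac{1-\lambda}{2}&\frac{1+\lambda}{2}&0&0&0\\ 0&0&\frac{\lambda+1}{2\lambda}&\frac{\lambda-1}{2\lambda}&0\\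 0&0&\frac{\lambda-1}{2\lambda}&\frac{\lambda+1}{2\lambda}&0\\ 0&0&0&0&1\end{pmatrix},\quad\lambda\in\mathbb{C}^\ast,$$ acting on $[x:y:z:t:w]$, which preserves $Q$ and both planes. *)

theory Defs
  imports Complex_Main
begin

text \<open>A point of P^1 x P^1 x P^4 is represented by homogeneous coordinates
  ([u1:v1],[u2:v2],[x:y:z:t:w]).\<close>

datatype pt = Pt complex complex complex complex complex complex complex complex complex

fun valid_pt :: "pt \<Rightarrow> bool" where
  "valid_pt (Pt u1 v1 u2 v2 x y z t w) \<longleftrightarrow>
     (u1, v1) \<noteq> (0, 0) \<and> (u2, v2) \<noteq> (0, 0) \<and> (x, y, z, t, w) \<noteq> (0, 0, 0, 0, 0)"

fun proj_eq :: "pt \<Rightarrow> pt \<Rightarrow> bool" where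
  "proj_eq (Pt u1 v1 u2 v2 x y z t w) (Pt u1' v1' u2' v2' x' y' z' t' w') \<longleftrightarrow>
     (\<exists>a b c. a \<noteq> 0 \<and> b \<noteq> 0 \<and> c \<noteq> 0 \<and>
        u1' = a * u1 \<and> v1' = a * v1 \<and> u2' = b * u2 \<and> v2' = b * v2 \<and>
        x' = c * x \<and> y' = c * y \<and> z' = c * z \<and> t' = c * t \<and> w' = c * w)"

fun inX :: "complex \<Rightarrow> complex \<Rightarrow> pt \<Rightarrow> bool" where
  "inX r s (Pt u1 v1 u2 v2 x y z t w) \<longleftrightarrow>
     u1 * x = v1 * y \<and> u2 * z = v2 * t \<and>
     w^2 + r * (x + y)^2 + r * (z + t)^2 = (2*s + 2) * (x*t + y*z) + (2*s - 2) * (x*z + y*t)"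

fun tau1 :: "pt \<Rightarrow> pt" where
  "tau1 (Pt u1 v1 u2 v2 x y z t w) = Pt v1 u1 v2 u2 y x t z w"

fun tau2 :: "pt \<Rightarrow> pt" where
  "tau2 (Pt u1 v1 u2 v2 x y z t w) = Pt u2 v2 u1 v1 z t x y w"

fun tau3 :: "pt \<Rightarrow> pt" where
  "tau3 (Pt u1 v1 u2 v2 x y z t w) = Pt u1 v1 u2 v2 x y z t (-w)"

text \<open>The element of Gamma corresponding to lambda: the given matrix on P^4, lifted to X.
  On X one has [u1:v1] = [y:x] and [u2:v2] = [t:z] (where defined), and the lift acts on
  (u1,v1) by the upper 2x2 block and on (u2,v2) by the middle 2x2 block.\<close>
fun gam :: "complex \<Rightarrow> pt \<Rightarrow> pt" where
  "gam l (Pt u1 v1 u2 v2 x y z t w) =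
     Pt ((1 + l)/2 * u1 + (1 - l)/2 * v1) ((1 - l)/2 * u1 + (1 + l)/2 * v1)
        ((l + 1)/(2*l) * u2 + (l - 1)/(2*l) * v2) ((l - 1)/(2*l) * u2 + (l + 1)/(2*l) * v2)
        ((1 + l)/2 * x + (1 - l)/2 * y) ((1 - l)/2 * x + (1 + l)/2 * y)
        ((l + 1)/(2*l) * z + (l - 1)/(2*l) * t) ((l - 1)/(2*l) * z + (l + 1)/(2*l) * t)
        w"

text \<open>The group G generated by Gamma and tau1, tau2, tau3 (closure under composition; all
  generators have inverses among the generators).\<close>
inductive_set Ggrp :: "(pt \<Rightarrow> pt) set" where
  G_id: "id \<in> Ggrp"
| G_tau1: "tau1 \<in> Ggrp"
| G_tau2: "tau2 \<in> Ggrp"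
| G_tau3: "tau3 \<in> Ggrp"
| G_gam: "l \<noteq> 0 \<Longrightarrow> gam l \<in> Ggrp"
| G_comp: "f \<in> Ggrp \<Longrightarrow> g \<in> Ggrp \<Longrightarrow> f \<circ> g \<in> Ggrp"

definition G_fixed :: "pt \<Rightarrow> bool" where
  "G_fixed p \<longleftrightarrow> (\<forall>g\<in>Ggrp. proj_eq p (g p))"

fun gradF1 :: "pt \<Rightarrow> complex list" where
  "gradF1 (Pt u1 v1 u2 v2 x y z t w) = [x, -y, 0, 0, u1, -v1, 0, 0, 0]"

fun gradF2 :: "pt \<Rightarrow> complex list" where
  "gradF2 (Pt u1 v1 u2 v2 x y z t w) = [0, 0, z, -t, 0, 0, u2, -v2, 0]"

fun gradF3 :: "complex \<Rightarrow> complex \<Rightarrow> pt \<Rightarrow> complex list" where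
  "gradF3 r s (Pt u1 v1 u2 v2 x y z t w) =
     [0, 0, 0, 0,
      2*r*(x + y) - (2*s + 2)*t - (2*s - 2)*z,
      2*r*(x + y) - (2*s + 2)*z - (2*s - 2)*t,
      2*r*(z + t) - (2*s + 2)*y - (2*s - 2)*x,
      2*r*(z + t) - (2*s + 2)*x - (2*s - 2)*y,
      2*w]"

text \<open>Jacobian criterion: X is singular at p iff the Jacobian matrix of the three
  (multi-homogeneous) equations has rank < 3 at p.\<close>
definition singular_X :: "complex \<Rightarrow> complex \<Rightarrow> pt \<Rightarrow> bool" where
  "singular_X r s p \<longleftrightarrow> inX r s p \<and>
     (\<exists>a b c. (a, b, c) \<noteq> (0, 0, 0) \<and>
        (\<forall>i<9. a * gradF1 p ! i + b * gradF2 p ! i + c * gradF3 r s p ! i = 0))"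

end

theory Submission
  imports Defs
begin

lemma fix_g: "G_fixed p \<Longrightarrow> g \<in> Ggrp \<Longrightarrow> proj_eq p (g p)"
  unfolding G_fixed_def by blast

lemma fixed_shape:
  assumes V: "valid_pt (Pt u1 v1 u2 v2 x y z t w)"
    and I: "inX r s (Pt u1 v1 u2 v2 x y z t w)"
    and F: "G_fixed (Pt u1 v1 u2 v2 x y z t w)"
  shows "w = 0 \<and> y = x \<and> t = z \<and> x \<noteq> 0 \<and> ((z = x \<and> r = s) \<or> (z = - x \<and> r = - s))
         \<and> v1 = u1 \<and> v2 = u2 \<and> u1 \<noteq> 0 \<and> u2 \<noteq> 0"
proof -
  from I have i1: "u1 * x = v1 * y" and i2: "u2 * z = v2 * t"
    and i3: "w^2 + r * (x + y)^2 + r * (z + t)^2 = (2*s + 2) * (x*t + y*z) + (2*s - 2) * (x*z + y*t)"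
    by auto
  have w0: "w = 0"
  proof (rule ccontr)
    assume wn: "w \<noteq> 0"
    from fix_g[OF F G_tau3] obtain c where c: "x = c*x" "y = c*y" "z = c*z" "t = c*t" "-w = c*w"
      unfolding tau3.simps proj_eq.simps by blast
    from c(5) wn have "c = -1"
      by (metis add.inverse_inverse minus_mult_commute mult_cancel_right1 mult_minus_left)
    with c have "x = 0" "y = 0" "z = 0" "t = 0" by auto
    with i3 wn show False by simp
  qed
  from fix_g[OF F G_tau2] obtain c2 where c2: "c2 \<noteq> 0" "z = c2*x" "t = c2*y" "x = c2*z" "y = c2*t"
    unfolding tau2.simps proj_eq.simps by blast
  have g2: "gam 2 \<in> Ggrp" by (rule G_gam) simp
  from fix_g[OF F g2] obtain c where c: "c \<noteq> 0"
     "(1 + 2)/2 * x + (1 - 2)/2 * y = c * x"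
     "(1 - 2)/2 * x + (1 + 2)/2 * y = c * y"
     "(2 + 1)/(2*2) * z + (2 - 1)/(2*2) * t = c * z"
     "(2 - 1)/(2*2) * z + (2 + 1)/(2*2) * t = c * t"
    unfolding gam.simps proj_eq.simps by blast
  have c2': "3*x - y = 2*c*x" "- x + 3*y = 2*c*y" "3*z + t = 4*c*z" "z + 3*t = 4*c*t"
    using c(2-5) by (simp_all add: field_simps)
  have e1: "(c - 1) * (x + y) = 0" using c2'(1,2) by algebra
  have e2: "(c - 2) * (x - y) = 0" using c2'(1,2) by algebra
  have e3: "(c - 1) * (z + t) = 0" using c2'(3,4) by algebra
  have e4: "(2*c - 1) * (z - t) = 0" using c2'(3,4) by algebra
  have nz: "\<not> (x = 0 \<and> y = 0 \<and> z = 0 \<and> t = 0)" using V w0 by auto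
  have xy: "y = x"
  proof (rule ccontr)
    assume "y \<noteq> x" then have "c = 2" using e2 by auto
    then have h1: "z + t = 0" and h2: "z - t = 0" using e3 e4 by auto
    have h3: "2*z = (z+t)+(z-t)" "2*t = (z+t)-(z-t)" by simp_all
    have "2*z = 0" "2*t = 0" unfolding h3 h1 h2 by simp_all
    then have "z = 0" "t = 0" by auto
    then have "x = 0" "y = 0" using c2(4,5) by simp_all
    with \<open>z = 0\<close> \<open>t = 0\<close> nz show False by auto
  qed
  have zt: "t = z"
  proof (rule ccontr)
    assume "t \<noteq> z" then have "2*c = 1" using e4 by auto
    then have "c \<noteq> 1" "c \<noteq> 2" by auto
    then have "x + y = 0" "x - y = 0" "z + t = 0" using e1 e2 e3 by auto
    then have "x = 0" "y = 0" using xy by auto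
    then have "z = 0" "t = 0" using c2(2,3) by simp_all
    with \<open>x = 0\<close> \<open>y = 0\<close> nz show False by auto
  qed
  have x0: "x \<noteq> 0" using nz xy zt c2(2) by auto
  have "c2 * c2 = 1" using c2(2,4) x0 by (metis mult.assoc mult_cancel_right1)
  then have "(c2 - 1) * (c2 + 1) = 0" by algebra
  then have ce: "c2 = 1 \<or> c2 = -1" by (auto simp: add_eq_0_iff2)
  have i3'': "0^2 + r * (x + x)^2 + r * (c2*x + c2*x)^2 = (2*s + 2) * (x*(c2*x) + x*(c2*x)) + (2*s - 2) * (x*(c2*x) + x*(c2*x))"
    using i3 unfolding w0 xy zt c2(2) .
  have sq: "(c2*x + c2*x)^2 = 4*(c2*c2)*x^2" by (simp add: power2_eq_square algebra_simps)
  have ia: "r * (c2*x + c2*x)^2 = 4*r*x^2" unfolding sq \<open>c2 * c2 = 1\<close> by simp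
  have ib: "(2*s + 2) * (x*(c2*x) + x*(c2*x)) + (2*s - 2) * (x*(c2*x) + x*(c2*x)) = 8*s*c2*x^2"
    by (simp add: power2_eq_square algebra_simps)
  have ic: "0^2 + r*(x+x)^2 + 4*r*x^2 = 8*r*x^2" by (simp add: power2_eq_square algebra_simps)
  have i3': "8 * r * x^2 = 8 * s * c2 * x^2" using i3'' unfolding ia ib ic .
  have "x^2 \<noteq> 0" using x0 by simp
  moreover have "(8*x^2) * r = (8*x^2) * (s*c2)" using i3' by (simp add: ac_simps)
  ultimately have rs: "r = s * c2" by simp
  have u: "v1 = u1" "v2 = u2" using i1 i2 xy zt x0 c2(1,2) by auto
  have u0: "u1 \<noteq> 0" "u2 \<noteq> 0" using V u by auto
  show ?thesis using w0 xy zt x0 ce rs c2(2) u u0 by auto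
qed

lemma gam_a: "(1 + l)/2 * a + (1 - l)/2 * a = (a::complex)"
  by (simp add: field_simps)
lemma gam_b: "(l::complex) \<noteq> 0 \<Longrightarrow> (l + 1)/(2*l) * b + (l - 1)/(2*l) * b = b"
  by (simp add: field_simps)
lemma gam_a2: "(1 - l)/2 * a + (1 + l)/2 * a = (a::complex)"
  by (simp add: field_simps)
lemma gam_b2: "(l::complex) \<noteq> 0 \<Longrightarrow> (l - 1)/(2*l) * b + (l + 1)/(2*l) * b = b"
  by (simp add: field_simps)

definition shape :: "complex \<Rightarrow> pt \<Rightarrow> bool" where
  "shape e q \<longleftrightarrow> (\<exists>a b c. a \<noteq> 0 \<and> b \<noteq> 0 \<and> c \<noteq> 0 \<and> q = Pt a a b b c c (e*c) (e*c) 0)"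

lemma G_inv:
  assumes "g \<in> Ggrp" and ee: "e * e = (1::complex)"
  shows "shape e q \<Longrightarrow> shape e (g q)"
  using assms(1)
proof (induction arbitrary: q)
  case G_id
  then show ?case by simp
next
  case G_tau1
  then obtain a b c where h: "a \<noteq> 0" "b \<noteq> 0" "c \<noteq> 0" "q = Pt a a b b c c (e*c) (e*c) 0"
    unfolding shape_def by blast
  have "tau1 q = Pt a a b b c c (e*c) (e*c) 0" unfolding h(4) by simp
  then show ?case unfolding shape_def using h(1-3) by blast
next
  case G_tau2
  then obtain a b c where h: "a \<noteq> 0" "b \<noteq> 0" "c \<noteq> 0" "q = Pt a a b b c c (e*c) (e*c) 0"
    unfolding shape_def by blast
  have e0: "e \<noteq> 0" using ee by auto
  have "e * (e * c) = c" using ee by (simp add: mult.assoc[symmetric])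
  then have "tau2 q = Pt b b a a (e*c) (e*c) (e*(e*c)) (e*(e*c)) 0" unfolding h(4) by simp
  moreover have "e * c \<noteq> 0" using e0 h(3) by simp
  ultimately show ?case unfolding shape_def using h(1-3) by blast
next
  case G_tau3
  then obtain a b c where h: "a \<noteq> 0" "b \<noteq> 0" "c \<noteq> 0" "q = Pt a a b b c c (e*c) (e*c) 0"
    unfolding shape_def by blast
  have "tau3 q = Pt a a b b c c (e*c) (e*c) 0" unfolding h(4) by simp
  then show ?case unfolding shape_def using h(1-3) by blast
next
  case (G_gam l)
  then obtain a b c where h: "a \<noteq> 0" "b \<noteq> 0" "c \<noteq> 0" "q = Pt a a b b c c (e*c) (e*c) 0"
    unfolding shape_def by blast
  have "gam l q = Pt a a b b c c (e*c) (e*c) 0"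
    unfolding h(4) gam.simps gam_a gam_b[OF G_gam(1)] gam_a2 gam_b2[OF G_gam(1)] by (rule refl)
  then show ?case unfolding shape_def using h(1-3) by blast
next
  case (G_comp f g)
  then show ?case by simp
qed

lemma backward:
  assumes ee: "e * e = (1::complex)" and rs: "r = s * e"
    and pe: "proj_eq (Pt 1 1 1 1 1 1 e e 0) p"
  shows "valid_pt p \<and> inX r s p \<and> G_fixed p"
proof -
  obtain u1 v1 u2 v2 x y z t w where P: "p = Pt u1 v1 u2 v2 x y z t w" by (cases p)
  from pe[unfolded P proj_eq.simps] obtain a b c where h0: "a \<noteq> 0" "b \<noteq> 0" "c \<noteq> 0"
    "u1 = a*1" "v1 = a*1" "u2 = b*1" "v2 = b*1" "x = c*1" "y = c*1" "z = c*e" "t = c*e" "w = c*0"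
    by blast
  have h: "a \<noteq> 0" "b \<noteq> 0" "c \<noteq> 0" "p = Pt a a b b c c (e*c) (e*c) 0"
    using h0 P by (simp_all add: mult.commute)
  have sh: "shape e p" unfolding shape_def using h by blast
  have v: "valid_pt p" using h by simp
  have sq: "(e*c + e*c)^2 = 4*(e*e)*c^2" by (simp add: power2_eq_square algebra_simps)
  have "0^2 + r * (c + c)^2 + r * (e*c + e*c)^2 = (2*s + 2) * (c*(e*c) + c*(e*c)) + (2*s - 2) * (c*(e*c) + c*(e*c))"
    unfolding sq ee rs by (simp add: power2_eq_square algebra_simps)
  then have i: "inX r s p" unfolding h(4) inX.simps by simp
  have f: "G_fixed p"
    unfolding G_fixed_def
  proof
    fix g assume "g \<in> Ggrp"
    from G_inv[OF this ee sh] obtain a' b' c' where h': "a' \<noteq> 0" "b' \<noteq> 0" "c' \<noteq> 0"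
      "g p = Pt a' a' b' b' c' c' (e*c') (e*c') 0" unfolding shape_def by blast
    have "proj_eq (Pt a a b b c c (e*c) (e*c) 0) (Pt a' a' b' b' c' c' (e*c') (e*c') 0)"
      unfolding proj_eq.simps
      apply (rule exI[of _ "a'/a"], rule exI[of _ "b'/b"], rule exI[of _ "c'/c"])
      using h(1-3) h'(1-3) by simp
    then show "proj_eq p (g p)" unfolding h'(4) h(4)[symmetric] .
  qed
  show ?thesis using v i f by blast
qed
lemma forward:
  assumes e: "e = 1 \<or> e = (-1::complex)" and rs: "r = s * e" and nz: "(r, s) \<noteq> (0, 0)"
    and V: "valid_pt p" and I: "inX r s p" and F: "G_fixed p"
  shows "proj_eq (Pt 1 1 1 1 1 1 e e 0) p"
proof (cases p)
  case (Pt u1 v1 u2 v2 x y z t w)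
  from fixed_shape[of u1 v1 u2 v2 x y z t w r s] V I F have
    sh: "w = 0 \<and> y = x \<and> t = z \<and> x \<noteq> 0 \<and> ((z = x \<and> r = s) \<or> (z = - x \<and> r = - s))
         \<and> v1 = u1 \<and> v2 = u2 \<and> u1 \<noteq> 0 \<and> u2 \<noteq> 0" unfolding Pt by blast
  have ze: "z = e * x"
    using sh e rs nz by auto
  show ?thesis unfolding Pt proj_eq.simps
    apply (rule exI[of _ u1], rule exI[of _ u2], rule exI[of _ x])
    using sh ze by (simp add: mult.commute)
qed

lemma sing:
  assumes "e * e = (1::complex)" and rs: "r = s * e"
  shows "singular_X r s (Pt 1 1 1 1 1 1 e e 0)"
proof -
  have i: "inX r s (Pt 1 1 1 1 1 1 e e 0)"
    using backward[OF assms, of "Pt 1 1 1 1 1 1 e e 0"] by (auto intro: exI[of _ 1])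
  have "\<forall>i<9. 0 * gradF1 (Pt 1 1 1 1 1 1 e e 0) ! i + 0 * gradF2 (Pt 1 1 1 1 1 1 e e 0) ! i
     + 1 * gradF3 r s (Pt 1 1 1 1 1 1 e e 0) ! i = 0"
  proof (intro allI impI)
    fix i :: nat assume "i < 9"
    then have "i = 0 \<or> i = 1 \<or> i = 2 \<or> i = 3 \<or> i = 4 \<or> i = 5 \<or> i = 6 \<or> i = 7 \<or> i = 8" by auto
    then show "0 * gradF1 (Pt 1 1 1 1 1 1 e e 0) ! i + 0 * gradF2 (Pt 1 1 1 1 1 1 e e 0) ! i
     + 1 * gradF3 r s (Pt 1 1 1 1 1 1 e e 0) ! i = 0"
      using assms by (auto simp: algebra_simps numeral_eq_Suc)
  qed
  then show ?thesis unfolding singular_X_def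
    apply -
    apply (rule conjI[OF i])
    apply (rule exI[of _ 0], rule exI[of _ 0], rule exI[of _ 1])
    apply (rule conjI)
     apply simp
    apply assumption
    done
qed

theorem lemma5p1:
  fixes r s :: complex
  assumes "(r, s) \<noteq> (0, 0)"
  shows "(\<not> (r = s \<or> r = - s) \<longrightarrow> \<not> (\<exists>p. valid_pt p \<and> inX r s p \<and> G_fixed p))
       \<and> (r = s \<longrightarrow>
            (\<forall>p. valid_pt p \<and> inX r s p \<and> G_fixed p \<longleftrightarrow> proj_eq (Pt 1 1 1 1 1 1 1 1 0) p)
            \<and> singular_X r s (Pt 1 1 1 1 1 1 1 1 0))
       \<and> (r = - s \<longrightarrow>
            (\<forall>p. valid_pt p \<and> inX r s p \<and> G_fixed p \<longleftrightarrow> proj_eq (Pt 1 1 1 1 1 1 (-1) (-1) 0) p)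
            \<and> singular_X r s (Pt 1 1 1 1 1 1 (-1) (-1) 0))"
proof (intro conjI impI)
  assume n: "\<not> (r = s \<or> r = - s)"
  show "\<not> (\<exists>p. valid_pt p \<and> inX r s p \<and> G_fixed p)"
  proof
    assume "\<exists>p. valid_pt p \<and> inX r s p \<and> G_fixed p"
    then obtain p where p: "valid_pt p" "inX r s p" "G_fixed p" by blast
    show False
    proof (cases p)
      case (Pt u1 v1 u2 v2 x y z t w)
      have "(z = x \<and> r = s) \<or> (z = - x \<and> r = - s)"
        using fixed_shape[OF p[unfolded Pt]] by blast
      with n show False by blast
    qed
  qed
next
  assume rs: "r = s"
  then have rs': "r = s * 1" by simp
  let ?P = "Pt 1 1 1 1 1 1 1 1 0"
  show "\<forall>p. valid_pt p \<and> inX r s p \<and> G_fixed p \<longleftrightarrow> proj_eq (Pt 1 1 1 1 1 1 1 1 0) p"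
  proof (intro allI iffI)
    fix p assume "valid_pt p \<and> inX r s p \<and> G_fixed p"
    then show "proj_eq ?P p" using forward[of 1, OF _ rs' assms] by simp
  next
    fix p assume "proj_eq ?P p"
    then show "valid_pt p \<and> inX r s p \<and> G_fixed p" using backward[of 1, OF _ rs'] by simp
  qed
  show "singular_X r s (Pt 1 1 1 1 1 1 1 1 0)" using sing[of 1, OF _ rs'] by simp
next
  assume rs: "r = - s"
  then have rs': "r = s * (-1)" by simp
  let ?P = "Pt 1 1 1 1 1 1 (-1) (-1) 0"
  show "\<forall>p. valid_pt p \<and> inX r s p \<and> G_fixed p \<longleftrightarrow> proj_eq (Pt 1 1 1 1 1 1 (-1) (-1) 0) p"
  proof (intro allI iffI)
    fix p assume "valid_pt p \<and> inX r s p \<and> G_fixed p"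
    then show "proj_eq ?P p" using forward[of "-1", OF _ rs' assms] by simp
  next
    fix p assume "proj_eq ?P p"
    then show "valid_pt p \<and> inX r s p \<and> G_fixed p" using backward[of "-1", OF _ rs'] by simp
  qed
  show "singular_X r s (Pt 1 1 1 1 1 1 (-1) (-1) 0)" using sing[of "-1", OF _ rs'] by simp
qed

end
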